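(* Consider the quadratic finite-horizon dynamic multi-agent system described in the context, with constants $\gamma,\alpha,\beta,\rho>0$ such that $\|\mathbf x_i(0)\|\le\gamma$, $\|\mathbf A_i\|\le\alpha$, $\|\mathbf B_i\|\le\beta$ and $\mathbf H_i\succeq\rho\mathbf I$ for all $i\in\mathcal V$, and assume $C(t)>0$ for all $t\in\mathcal T$. Let $\lambda^\dagger>0$ and let $\delta_{\max}>0$ satisfy, for every $k\in\mathcal T$, $$\delta_{\max}\sum_{t=k+1}^{N}\Big[\gamma\,\alpha^{2t-k-1}+\beta\sum_{\substack{j=0\\ j\neq k}}^{t-1}\sqrt{\tfrac{C(j)}{\rho}}\;\alpha^{2t-j-k-2}\Big]\;\le\;\frac{\sqrt{C(k)\rho}}{n\beta}\,\lambda^\dagger .$$ Then for every choice of symmetric positive definite matrices $\mathbf Q_i,\mathbf R_i$ ($i\in\mathcal V$) with $\|\mathbf Q_i\|\le\delta_{\max}$, every competitive equilibrium $(\boldsymbol\lambda^\ast,\mathbf U^\ast,\mathbf E^\ast)$ satisfies $\lambda^\ast_t\le\lambda^\dagger$ for all $t\in\mathcal T$.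
   Context: Finite-horizon dynamic multi-agent system: $n$ agents $\mathcal V=\{1,\dots,n\}$, horizon $N\ge1$, $\mathcal T=\{0,\dots,N-1\}$. Agent $i$ has state $\mathbf x_i(t)\in\mathbb R^d$, input $\mathbf u_i(t)\in\mathbb R^m$, dynamics $\mathbf x_i(t+1)=\mathbf A_i\mathbf x_i(t)+\mathbf B_i\mathbf u_i(t)$ with given $\mathbf x_i(0)$, excess resource $a_i(t)\in\mathbb R$, and $C(t)=\sum_{i=1}^na_i(t)$. Quadratic case: agent $i$'s parameter is $\theta_i=(\mathbf Q_i,\mathbf R_i)$ with $\mathbf Q_i\in\mathbb R^{d\times d}$, $\mathbf R_i\in\mathbb R^{m\times m}$ symmetric positive definite; running utility $f(\mathbf x,\mathbf u;\theta_i)=-\mathbf x^\top\mathbf Q_i\mathbf x-\mathbf u^\top\mathbf R_i\mathbf u$; terminal utility $\phi(\mathbf x;\theta_i)=-\mathbf x^\top\mathbf Q_i\mathbf x$; consumption $h_i(\mathbf u)=\mathbf u^\top\mathbf H_i\mathbf u$ with $\mathbf H_i$ symmetric positive definite. Norms are Euclidean / induced operator norms. A competitive equilibrium is a triple $(\boldsymbol\lambda^\ast,\mathbf U^\ast,\mathbf E^\ast)$, $\boldsymbol\lambda^\ast=(\lambda^\ast_0,\dots,\lambda^\ast_{N-1})\in\mathbb R^N$, such that (i) for each $i\in\mathcal V$, $(\mathbf U_i^\ast,\mathbf E_i^\ast)=((\mathbf u_i^\ast(t))_{t\in\mathcal T},(e_i^\ast(t))_{t\in\mathcal T})$ is a maximizer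 of $\phi(\mathbf x_i(N);\theta_i)+\sum_{t=0}^{N-1}\big(f(\mathbf x_i(t),\mathbf u_i(t);\theta_i)+\lambda^\ast_t e_i(t)\big)$ over all inputs $\mathbf u_i(t)\in\mathbb R^m$ and trades $e_i(t)\in\mathbb R$ subject to the dynamics and $e_i(t)\le a_i(t)-h_i(\mathbf u_i(t))$ for all $t\in\mathcal T$; and (ii) $\sum_{i=1}^ne_i^\ast(t)=0$ for all $t\in\mathcal T$. *)

theory Defs
  imports "HOL-Analysis.Analysis"
begin

definition sym_pd :: "real^'k^'k \<Rightarrow> bool" where
  "sym_pd M \<longleftrightarrow> transpose M = M \<and> (\<forall>x. x \<noteq> 0 \<longrightarrow> 0 < x \<bullet> (M *v x))"

fun state :: "real^'d^'d \<Rightarrow> real^'m^'d \<Rightarrow> real^'d \<Rightarrow> (nat \<Rightarrow> real^'m) \<Rightarrow> nat \<Rightarrow> real^'d" where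
  "state A B x0 u 0 = x0"
| "state A B x0 u (Suc t) = A *v state A B x0 u t + B *v u t"

definition run_util :: "real^'d^'d \<Rightarrow> real^'m^'m \<Rightarrow> real^'d \<Rightarrow> real^'m \<Rightarrow> real" where
  "run_util Q R x u = - (x \<bullet> (Q *v x)) - (u \<bullet> (R *v u))"

definition term_util :: "real^'d^'d \<Rightarrow> real^'d \<Rightarrow> real" where
  "term_util Q x = - (x \<bullet> (Q *v x))"

definition consumption :: "real^'m^'m \<Rightarrow> real^'m \<Rightarrow> real" where
  "consumption H u = u \<bullet> (H *v u)"

definition agent_payoff ::
  "nat \<Rightarrow> real^'d^'d \<Rightarrow> real^'m^'d \<Rightarrow> real^'d \<Rightarrow> real^'d^'d \<Rightarrow> real^'m^'m
   \<Rightarrow> (nat \<Rightarrow> real) \<Rightarrow> (nat \<Rightarrow> real^'m) \<Rightarrow> (nat \<Rightarrow> real) \<Rightarrow> real" where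
  "agent_payoff N A B x0 Q R lam u e =
     term_util Q (state A B x0 u N)
     + (\<Sum>t<N. run_util Q R (state A B x0 u t) (u t) + lam t * e t)"

definition agent_feasible ::
  "nat \<Rightarrow> real^'m^'m \<Rightarrow> (nat \<Rightarrow> real) \<Rightarrow> (nat \<Rightarrow> real^'m) \<Rightarrow> (nat \<Rightarrow> real) \<Rightarrow> bool" where
  "agent_feasible N H a u e \<longleftrightarrow> (\<forall>t<N. e t \<le> a t - consumption H (u t))"

definition competitive_equilibrium ::
  "nat \<Rightarrow> nat \<Rightarrow> (nat \<Rightarrow> real^'d^'d) \<Rightarrow> (nat \<Rightarrow> real^'m^'d) \<Rightarrow> (nat \<Rightarrow> real^'d)
   \<Rightarrow> (nat \<Rightarrow> real^'d^'d) \<Rightarrow> (nat \<Rightarrow> real^'m^'m) \<Rightarrow> (nat \<Rightarrow> real^'m^'m)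
   \<Rightarrow> (nat \<Rightarrow> nat \<Rightarrow> real)
   \<Rightarrow> (nat \<Rightarrow> real) \<Rightarrow> (nat \<Rightarrow> nat \<Rightarrow> real^'m) \<Rightarrow> (nat \<Rightarrow> nat \<Rightarrow> real) \<Rightarrow> bool" where
  "competitive_equilibrium n N A B x0 Q R H a lam U E \<longleftrightarrow>
     (\<forall>i<n. agent_feasible N (H i) (a i) (U i) (E i) \<and>
        (\<forall>u e. agent_feasible N (H i) (a i) u e \<longrightarrow>
           agent_payoff N (A i) (B i) (x0 i) (Q i) (R i) lam u e
             \<le> agent_payoff N (A i) (B i) (x0 i) (Q i) (R i) lam (U i) (E i)))
     \<and> (\<forall>t<N. (\<Sum>i<n. E i t) = 0)"

end

theory Submission
  imports Defs
begin


lemma state_lin: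
  "state A B x0 (\<lambda>j. v j + s *\<^sub>R w j) t = state A B x0 v t + s *\<^sub>R state A B 0 w t"
  by (induction t) (simp_all add: algebra_simps)

lemma mv_norm_le:
  assumes "onorm (\<lambda>x. M *v x) \<le> c"
  shows "norm (M *v (x::real^'a)) \<le> c * norm (x)"
proof -
  have "bounded_linear (\<lambda>x. M *v (x::real^'a))"
    by (simp add: linear_conv_bounded_linear)
  then have "norm (M *v x) \<le> onorm (\<lambda>x. M *v x) * norm x" by (rule onorm)
  also have "\<dots> \<le> c * norm x" using assms by (simp add: mult_right_mono)
  finally show ?thesis .
qed

lemma state_bound:
  assumes "\<And>x. norm (A *v x) \<le> \<alpha> * norm x" "\<And>x. norm (B *v x) \<le> \<beta> * norm x" "\<alpha> \<ge> 0"
  shows "norm (state A B x0 u t) \<le> \<alpha>^t * norm x0 + (\<Sum>j<t. \<alpha>^(t-1-j) * (\<beta> * norm (u j)))"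
proof (induction t)
  case 0 then show ?case by simp
next
  case (Suc t)
  have "norm (state A B x0 u (Suc t)) \<le> norm (A *v state A B x0 u t) + norm (B *v u t)"
    by (simp add: norm_triangle_ineq)
  also have "\<dots> \<le> \<alpha> * norm (state A B x0 u t) + \<beta> * norm (u t)"
    using assms by (simp add: add_mono)
  also have "\<dots> \<le> \<alpha> * (\<alpha>^t * norm x0 + (\<Sum>j<t. \<alpha>^(t-1-j) * (\<beta> * norm (u j)))) + \<beta> * norm (u t)"
    using Suc assms(3) by (simp add: mult_left_mono)
  also have "\<dots> = \<alpha>^Suc t * norm x0 + (\<Sum>j<Suc t. \<alpha>^(Suc t-1-j) * (\<beta> * norm (u j)))"
  proof -
    have "\<alpha> * (\<Sum>j<t. \<alpha>^(t-1-j) * (\<beta> * norm (u j))) = (\<Sum>j<t. \<alpha>^(Suc t-1-j) * (\<beta> * norm (u j)))"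
      unfolding sum_distrib_left
    proof (rule sum.cong)
      fix j assume "j \<in> {..<t}"
      then have "Suc t - 1 - j = Suc (t - 1 - j)" by auto
      then show "\<alpha> * (\<alpha>^(t-1-j) * (\<beta> * norm (u j))) = \<alpha>^(Suc t-1-j) * (\<beta> * norm (u j))"
        by simp
    qed simp
    then show ?thesis by (simp add: algebra_simps)
  qed
  finally show ?case .
qed

lemma quad_scale: "(s *\<^sub>R u) \<bullet> (M *v (s *\<^sub>R u)) = s^2 * (u \<bullet> (M *v (u::real^'a)))"
  by (simp add: matrix_vector_mult_scaleR power2_eq_square)

lemma sym_inner: "transpose M = M \<Longrightarrow> y \<bullet> (M *v z) = z \<bullet> (M *v (y::real^'a))"
  by (metis dot_lmul_matrix inner_commute transpose_matrix_vector)

lemma quad_expand: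
  assumes "transpose M = M"
  shows "(y + s *\<^sub>R z) \<bullet> (M *v (y + s *\<^sub>R z)) = y \<bullet> (M *v y) + 2 * s * (y \<bullet> (M *v z)) + s^2 * (z \<bullet> (M *v (z::real^'a)))"
  using sym_inner[OF assms, of z y]
  by (simp add: algebra_simps inner_add_left inner_add_right power2_eq_square)

lemma sym_pd_nonneg: "sym_pd M \<Longrightarrow> 0 \<le> x \<bullet> (M *v x)"
  unfolding sym_pd_def by (cases "x = 0") (auto intro: less_imp_le)

lemma payoff_e_update:
  assumes "k < N"
  shows "agent_payoff N A B xi Q R lam u (e(k:=v)) = agent_payoff N A B xi Q R lam u e + lam k * (v - e k)"
proof -
  have "(\<Sum>t<N. run_util Q R (state A B xi u t) (u t) + lam t * (e(k:=v)) t)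
     = (\<Sum>t<N. (run_util Q R (state A B xi u t) (u t) + lam t * e t) + (if t = k then lam k * (v - e k) else 0))"
    by (rule sum.cong) (auto simp: algebra_simps)
  also have "\<dots> = (\<Sum>t<N. run_util Q R (state A B xi u t) (u t) + lam t * e t) + lam k * (v - e k)"
    using assms by (simp add: sum.distrib)
  finally show ?thesis unfolding agent_payoff_def by simp
qed

lemma payoff_quad:
  fixes U :: "nat \<Rightarrow> real^'m" and A :: "real^'d^'d" and B x0
  assumes "k < N" "transpose Q = Q"
  defines "y \<equiv> state A B x0 (U(k := 0))"
    and "z \<equiv> state A B 0 (\<lambda>j. if j = k then U k else 0)"
  shows "agent_payoff N A B x0 Q R lam (U(k := s *\<^sub>R U k)) (E(k := a k - consumption H (s *\<^sub>R U k)))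
    = (- (y N \<bullet> (Q *v y N)) + (\<Sum>t<N. - (y t \<bullet> (Q *v y t)) - (if t = k then 0 else U t \<bullet> (R *v U t))
           + (if t = k then lam k * a k else lam t * E t)))
      - 2 * s * (y N \<bullet> (Q *v z N) + (\<Sum>t<N. y t \<bullet> (Q *v z t)))
      - s^2 * (z N \<bullet> (Q *v z N) + (\<Sum>t<N. z t \<bullet> (Q *v z t) + (if t = k then U k \<bullet> (R *v U k) + lam k * consumption H (U k) else 0)))"
proof -
  have UU: "U(k := s *\<^sub>R U k) = (\<lambda>j. (U(k:=0)) j + s *\<^sub>R (if j = k then U k else 0))"
    by (auto simp: fun_eq_iff)
  have st: "\<And>t. state A B x0 (U(k := s *\<^sub>R U k)) t = y t + s *\<^sub>R z t"
    unfolding UU y_def z_def by (rule state_lin)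
  have trm: "\<And>t. run_util Q R (y t + s *\<^sub>R z t) ((U(k := s *\<^sub>R U k)) t) + lam t * (E(k := a k - consumption H (s *\<^sub>R U k))) t
     = (- (y t \<bullet> (Q *v y t)) - (if t = k then 0 else U t \<bullet> (R *v U t))
           + (if t = k then lam k * a k else lam t * E t))
       - 2 * s * (y t \<bullet> (Q *v z t))
       - s^2 * (z t \<bullet> (Q *v z t) + (if t = k then U k \<bullet> (R *v U k) + lam k * consumption H (U k) else 0))"
    unfolding run_util_def quad_expand[OF assms(2)] consumption_def
    by (auto simp: quad_scale algebra_simps power2_eq_square)
  show ?thesis
    unfolding agent_payoff_def st trm term_util_def quad_expand[OF assms(2)]
    using assms(1) by (simp add: sum.distrib sum_subtractf sum_distrib_left algebra_simps if_distrib[of "\<lambda>x. s^2 * x"] cong: if_cong)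
qed

lemma z_zero: "t \<le> k \<Longrightarrow> state A B 0 (\<lambda>j. if j = k then v else 0) t = 0"
  by (induction t) auto

lemma key_agent:
  fixes U :: "nat \<Rightarrow> real^'m" and A :: "real^'d^'d" and B x0
  assumes k: "k < N" and Q: "sym_pd Q" and R: "sym_pd R" and lam: "0 < lam k"
    and h: "0 < consumption H (U k)"
    and feas: "agent_feasible N H a U E"
    and opt: "\<forall>u e. agent_feasible N H a u e \<longrightarrow>
           agent_payoff N A B x0 Q R lam u e \<le> agent_payoff N A B x0 Q R lam U E"
  defines "y \<equiv> state A B x0 (U(k := 0))"
    and "z \<equiv> state A B 0 (\<lambda>j. if j = k then U k else 0)"
  shows "lam k * consumption H (U k) \<le> (\<Sum>t\<in>{k+1..N}. \<bar>y t \<bullet> (Q *v z t)\<bar>)"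
proof -
  have QT: "transpose Q = Q" using Q by (simp add: sym_pd_def)
  define c0 where "c0 = (- (y N \<bullet> (Q *v y N)) + (\<Sum>t<N. - (y t \<bullet> (Q *v y t)) - (if t = k then 0 else U t \<bullet> (R *v U t))
           + (if t = k then lam k * a k else lam t * E t)))"
  define W where "W = (y N \<bullet> (Q *v z N) + (\<Sum>t<N. y t \<bullet> (Q *v z t)))"
  define P where "P = (z N \<bullet> (Q *v z N) + (\<Sum>t<N. z t \<bullet> (Q *v z t) + (if t = k then U k \<bullet> (R *v U k) + lam k * consumption H (U k) else 0)))"
  define g where "g s = agent_payoff N A B x0 Q R lam (U(k := s *\<^sub>R U k)) (E(k := a k - consumption H (s *\<^sub>R U k)))" for s
  have g: "g s = c0 - 2 * s * W - s^2 * P" for s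
    unfolding g_def c0_def W_def P_def y_def z_def by (rule payoff_quad[OF k QT])
  have fs: "agent_feasible N H a (U(k := s *\<^sub>R U k)) (E(k := a k - consumption H (s *\<^sub>R U k)))" for s
    using feas unfolding agent_feasible_def by auto
  have g1: "g 1 = agent_payoff N A B x0 Q R lam U E + lam k * (a k - consumption H (U k) - E k)"
    unfolding g_def using payoff_e_update[OF k, where A=A and B=B and xi=x0 and Q=Q and R=R and lam=lam and u=U and e=E] by simp
  have slack: "E k \<le> a k - consumption H (U k)" using feas k unfolding agent_feasible_def by auto
  have gle: "g s \<le> g 1" for s
  proof -
    have "g s \<le> agent_payoff N A B x0 Q R lam U E" unfolding g_def using opt fs by blast
    also have "\<dots> \<le> g 1" unfolding g1 using lam slack by simp
    finally show ?thesis .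
  qed
  have Pge: "lam k * consumption H (U k) \<le> P"
  proof -
    let ?f = "\<lambda>t. z t \<bullet> (Q *v z t) + (if t = k then U k \<bullet> (R *v U k) + lam k * consumption H (U k) else 0)"
    have nn: "\<And>t. 0 \<le> ?f t" using sym_pd_nonneg[OF Q] sym_pd_nonneg[OF R] lam h
      by (simp add: add_nonneg_nonneg)
    have "lam k * consumption H (U k) \<le> ?f k" using sym_pd_nonneg[OF Q] sym_pd_nonneg[OF R] by simp
    also have "\<dots> \<le> (\<Sum>t<N. ?f t)" by (rule member_le_sum) (simp add: k, rule nn, simp)
    also have "\<dots> \<le> P" unfolding P_def using sym_pd_nonneg[OF Q] by simp
    finally show ?thesis .
  qed
  have Ppos: "P > 0" using Pge lam h by (smt (verit) mult_pos_pos)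
  have WP: "W = - P"
  proof -
    have "g (- W / P) \<le> g 1" by (rule gle)
    moreover have "c0 - 2 * (- W / P) * W - (- W / P)^2 * P = c0 + W^2 / P" using Ppos
      by (simp add: power2_eq_square field_simps)
    ultimately have "c0 + W^2 / P \<le> c0 - 2 * W - P" unfolding g by simp
    then have "W^2/P + 2*W + P \<le> 0" by linarith
    then have "P * (W^2/P + 2*W + P) \<le> 0" using Ppos by (intro mult_nonneg_nonpos) auto
    moreover have "P * (W^2/P + 2*W + P) = W^2 + 2 * W * P + P^2" using Ppos
      by (simp add: field_simps power2_eq_square)
    ultimately have "W^2 + 2 * W * P + P^2 \<le> 0" by simp
    then have "(W + P)^2 \<le> 0" by (simp add: power2_eq_square algebra_simps)
    then show ?thesis by (smt (verit) zero_le_power2 power_eq_0_iff)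
  qed
  have "lam k * consumption H (U k) \<le> \<bar>W\<bar>" using Pge WP by simp
  also have "W = (\<Sum>t\<in>{..N}. y t \<bullet> (Q *v z t))"
    unfolding W_def by (simp add: lessThan_Suc_atMost[symmetric])
  also have "\<bar>\<dots>\<bar> \<le> (\<Sum>t\<in>{..N}. \<bar>y t \<bullet> (Q *v z t)\<bar>)" by (rule sum_abs)
  also have "\<dots> = (\<Sum>t\<in>{k+1..N}. \<bar>y t \<bullet> (Q *v z t)\<bar>)"
    by (rule sum.mono_neutral_right) (auto simp: z_def z_zero)
  finally show ?thesis .
qed

lemma tight:
  assumes k: "k < N" and lam: "0 < lam k"
    and feas: "agent_feasible N H a U E"
    and opt: "\<forall>u e. agent_feasible N H a u e \<longrightarrow>
           agent_payoff N A B x0 Q R lam u e \<le> agent_payoff N A B x0 Q R lam U E"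
  shows "E k = a k - consumption H (U k)"
proof -
  have f: "agent_feasible N H a U (E(k := a k - consumption H (U k)))"
    using feas unfolding agent_feasible_def by auto
  have "agent_payoff N A B x0 Q R lam U (E(k := a k - consumption H (U k))) \<le> agent_payoff N A B x0 Q R lam U E"
    using opt f by blast
  then have "lam k * (a k - consumption H (U k) - E k) \<le> 0" using payoff_e_update[OF k, where A=A and B=B and xi=x0 and Q=Q and R=R and lam=lam and u=U and e=E] by simp
  then have "a k - consumption H (U k) - E k \<le> 0" using lam by (simp add: mult_le_0_iff)
  moreover have "E k \<le> a k - consumption H (U k)" using feas k unfolding agent_feasible_def by auto
  ultimately show ?thesis by simp
qed

lemma final_arith:
  fixes lamk h m Cv rho lamdag nn :: real
  assumes "0 < rho" "0 < Cv" "1 \<le> nn" "rho * m^2 \<le> h" "Cv / nn \<le> h" "0 \<le> m" "0 < lamdag"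
    and "lamk * h \<le> m * (sqrt (Cv * rho) / nn * lamdag)"
  shows "lamk \<le> lamdag"
proof -
  have nnp: "nn > 0" using assms(3) by simp
  have "Cv \<le> h * nn" using assms(5) pos_divide_le_eq[OF nnp] by simp
  then have Cle: "Cv \<le> nn * h" by (simp only: mult.commute)
  have hpos: "h > 0"
  proof (rule ccontr)
    assume "\<not> h > 0"
    then have "nn * h \<le> 0" using nnp mult_nonneg_nonpos[of nn h] by simp
    then show False using assms(2) Cle by linarith
  qed
  have "(m * sqrt (Cv * rho))^2 = (rho * m^2) * Cv" using assms(1,2)
    by (simp add: power_mult_distrib)
  also have "\<dots> \<le> h * Cv" using mult_right_mono[OF assms(4), of Cv] assms(2) by simp
  also have "\<dots> \<le> h * (nn * h)" using mult_left_mono[OF Cle, of h] hpos by simp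
  also have "\<dots> \<le> (nn * h)^2"
  proof -
    have "h * (nn * h) = nn * (h*h)" by simp
    also have "\<dots> \<le> (nn * nn) * (h*h)"
    proof (rule mult_right_mono)
      show "nn \<le> nn * nn" using assms(3) mult_left_mono[of 1 nn nn] by simp
    qed simp
    finally show ?thesis by (simp add: power2_eq_square ac_simps)
  qed
  finally have sq: "(m * sqrt (Cv * rho))^2 \<le> (nn * h)^2" .
  have "m * sqrt (Cv * rho) \<le> nn * h"
    using power2_le_imp_le[OF sq] nnp hpos by simp
  then have "m * sqrt (Cv * rho) \<le> h * nn" by (simp only: mult.commute)
  then have "m * sqrt (Cv * rho) / nn \<le> h" using pos_divide_le_eq[OF nnp] by simp
  then have "(m * sqrt (Cv * rho) / nn) * lamdag \<le> h * lamdag"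
    using mult_right_mono[OF _ less_imp_le[OF assms(7)]] by blast
  then have "m * (sqrt (Cv * rho) / nn * lamdag) \<le> h * lamdag" by simp
  then have "lamk * h \<le> h * lamdag" using assms(8) by linarith
  then have "lamk * h \<le> lamdag * h" by (simp only: mult.commute)
  then show ?thesis using hpos by simp
qed


lemma term_bound:
  fixes U :: "nat \<Rightarrow> real^'m" and A :: "real^'d^'d" and B :: "real^'m^'d" and Q :: "real^'d^'d"
  assumes t: "k + 1 \<le> t" and al: "0 \<le> \<alpha>" and be: "0 \<le> \<beta>" and de: "0 \<le> \<delta>"
    and Abd: "\<And>x. norm (A *v x) \<le> \<alpha> * norm x"
    and Bbd: "\<And>x. norm (B *v x) \<le> \<beta> * norm x"
    and Qbd: "\<And>x. norm (Q *v x) \<le> \<delta> * norm x"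
    and x0bd: "norm x0 \<le> \<gamma>"
    and ubd: "\<And>j. j \<noteq> k \<Longrightarrow> j < t \<Longrightarrow> norm (U j) \<le> s j"
  shows "\<bar>state A B x0 (U(k:=0)) t \<bullet> (Q *v state A B 0 (\<lambda>j. if j = k then U k else 0) t)\<bar>
    \<le> \<beta> * norm (U k) * (\<delta> * (\<gamma> * \<alpha>^(2*t-k-1) + \<beta> * (\<Sum>j\<in>{0..t-1}-{k}. s j * \<alpha>^(2*t-j-k-2))))"
proof -
  define y where "y = state A B x0 (U(k:=0)) t"
  define z where "z = state A B 0 (\<lambda>j. if j = k then U k else 0) t"
  define S where "S = {0..t-1}-{k}"
  define Y where "Y = \<gamma> * \<alpha>^t + \<beta> * (\<Sum>j\<in>S. s j * \<alpha>^(t-1-j))"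
  have ny: "norm y \<le> Y"
  proof -
    have "norm y \<le> \<alpha>^t * norm x0 + (\<Sum>j<t. \<alpha>^(t-1-j) * (\<beta> * norm ((U(k:=0)) j)))"
      unfolding y_def by (rule state_bound[OF Abd Bbd al])
    also have "(\<Sum>j<t. \<alpha>^(t-1-j) * (\<beta> * norm ((U(k:=0)) j))) = (\<Sum>j\<in>S. \<alpha>^(t-1-j) * (\<beta> * norm ((U(k:=0)) j)))"
    proof (rule sum.mono_neutral_right)
      show "S \<subseteq> {..<t}" unfolding S_def using t by (auto simp: subset_iff)
      show "\<forall>i\<in>{..<t} - S. \<alpha>^(t-1-i) * (\<beta> * norm ((U(k:=0)) i)) = 0"
      proof
        fix i assume "i \<in> {..<t} - S"
        then have "i = k" unfolding S_def by auto
        then show "\<alpha>^(t-1-i) * (\<beta> * norm ((U(k:=0)) i)) = 0" by simp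
      qed
    qed simp
    also have "\<dots> = (\<Sum>j\<in>S. \<alpha>^(t-1-j) * (\<beta> * norm (U j)))"
      by (rule sum.cong) (auto simp: S_def)
    also have "\<dots> \<le> (\<Sum>j\<in>S. \<alpha>^(t-1-j) * (\<beta> * s j))"
    proof (rule sum_mono)
      fix j assume "j \<in> S"
      then have "norm (U j) \<le> s j" using t ubd[of j] by (auto simp: S_def)
      then have "\<beta> * norm (U j) \<le> \<beta> * s j" using be by (simp add: mult_left_mono)
      then show "\<alpha>^(t-1-j) * (\<beta> * norm (U j)) \<le> \<alpha>^(t-1-j) * (\<beta> * s j)"
        using al by (simp add: mult_left_mono)
    qed
    also have "\<dots> = \<beta> * (\<Sum>j\<in>S. s j * \<alpha>^(t-1-j))"
      by (simp add: sum_distrib_left algebra_simps)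
    finally have "norm y \<le> \<alpha>^t * norm x0 + \<beta> * (\<Sum>j\<in>S. s j * \<alpha>^(t-1-j))" by simp
    moreover have "\<alpha>^t * norm x0 \<le> \<alpha>^t * \<gamma>" using x0bd al by (simp add: mult_left_mono)
    ultimately show ?thesis unfolding Y_def by (simp add: mult.commute)
  qed
  have nz: "norm z \<le> \<alpha>^(t-k-1) * (\<beta> * norm (U k))"
  proof -
    have "norm z \<le> \<alpha>^t * norm (0::real^'d) + (\<Sum>j<t. \<alpha>^(t-1-j) * (\<beta> * norm (if j = k then U k else 0)))"
      unfolding z_def by (rule state_bound[OF Abd Bbd al])
    also have "\<dots> = (\<Sum>j<t. if j = k then \<alpha>^(t-1-k) * (\<beta> * norm (U k)) else 0)"
      unfolding norm_zero mult_zero_right add_0_left by (rule sum.cong) auto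
    also have "\<dots> = \<alpha>^(t-k-1) * (\<beta> * norm (U k))" using t by simp
    finally show ?thesis .
  qed
  have "\<bar>y \<bullet> (Q *v z)\<bar> \<le> norm y * norm (Q *v z)" by (rule Cauchy_Schwarz_ineq2)
  also have "\<dots> \<le> Y * (\<delta> * (\<alpha>^(t-k-1) * (\<beta> * norm (U k))))"
  proof (rule mult_mono)
    show "norm (Q *v z) \<le> \<delta> * (\<alpha>^(t-k-1) * (\<beta> * norm (U k)))"
      using Qbd[of z] mult_left_mono[OF nz de] by linarith
    show "0 \<le> Y" using ny norm_ge_zero order_trans by blast
  qed (use ny in auto)
  also have "\<dots> = \<beta> * norm (U k) * (\<delta> * (Y * \<alpha>^(t-k-1)))" by (simp add: algebra_simps)
  also have "Y * \<alpha>^(t-k-1) = \<gamma> * \<alpha>^(2*t-k-1) + \<beta> * (\<Sum>j\<in>S. s j * \<alpha>^(2*t-j-k-2))"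
  proof -
    have e1: "\<alpha>^t * \<alpha>^(t-k-1) = \<alpha>^(2*t-k-1)"
    proof -
      have "t + (t-k-1) = 2*t-k-1" using t by simp
      then show ?thesis by (metis power_add)
    qed
    have e2: "(\<Sum>j\<in>S. s j * \<alpha>^(t-1-j)) * \<alpha>^(t-k-1) = (\<Sum>j\<in>S. s j * \<alpha>^(2*t-j-k-2))"
      unfolding sum_distrib_right
    proof (rule sum.cong)
      fix j assume "j \<in> S"
      then have "j \<le> t - 1" by (auto simp: S_def)
      then have "(t-1-j) + (t-k-1) = 2*t-j-k-2" using t by simp
      then show "s j * \<alpha>^(t-1-j) * \<alpha>^(t-k-1) = s j * \<alpha>^(2*t-j-k-2)"
        by (metis power_add mult.assoc)
    qed simp
    show ?thesis unfolding Y_def using e1 e2 by (simp add: algebra_simps)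
  qed
  finally show ?thesis unfolding y_def z_def S_def .
qed



theorem theorem2:
  fixes n N :: nat
    and A :: "nat \<Rightarrow> real^'d^'d" and B :: "nat \<Rightarrow> real^'m^'d" and x0 :: "nat \<Rightarrow> real^'d"
    and H :: "nat \<Rightarrow> real^'m^'m" and a :: "nat \<Rightarrow> nat \<Rightarrow> real"
    and \<gamma> \<alpha> \<beta> \<rho> lamdag deltamax :: real
  assumes N: "N \<ge> 1"
    and pos: "\<gamma> > 0" "\<alpha> > 0" "\<beta> > 0" "\<rho> > 0"
    and x0_bd: "\<forall>i<n. norm (x0 i) \<le> \<gamma>"
    and A_bd: "\<forall>i<n. onorm (\<lambda>x. A i *v x) \<le> \<alpha>"
    and B_bd: "\<forall>i<n. onorm (\<lambda>u. B i *v u) \<le> \<beta>"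
    and H_pd: "\<forall>i<n. sym_pd (H i)"
    and H_bd: "\<forall>i<n. \<forall>u. \<rho> * (u \<bullet> u) \<le> u \<bullet> (H i *v u)"
    and C_pos: "\<forall>t<N. (\<Sum>i<n. a i t) > 0"
    and lam_pos: "lamdag > 0"
    and delta_pos: "deltamax > 0"
    and delta_cond: "\<forall>k<N.
        deltamax * (\<Sum>t\<in>{k+1..N}. \<gamma> * \<alpha> ^ (2*t - k - 1)
            + \<beta> * (\<Sum>j\<in>{0..t-1} - {k}. sqrt ((\<Sum>i<n. a i j) / \<rho>) * \<alpha> ^ (2*t - j - k - 2)))
        \<le> sqrt ((\<Sum>i<n. a i k) * \<rho>) / (real n * \<beta>) * lamdag"
  shows "\<forall>Q :: nat \<Rightarrow> real^'d^'d. \<forall>R :: nat \<Rightarrow> real^'m^'m.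
           (\<forall>i<n. sym_pd (Q i) \<and> sym_pd (R i) \<and> onorm (\<lambda>x. Q i *v x) \<le> deltamax) \<longrightarrow>
           (\<forall>lam U E. competitive_equilibrium n N A B x0 Q R H a lam U E \<longrightarrow>
              (\<forall>t<N. lam t \<le> lamdag))"
proof (intro allI impI)
  fix Q :: "nat \<Rightarrow> real^'d^'d" and R :: "nat \<Rightarrow> real^'m^'m" and lam U E k
  assume QR: "\<forall>i<n. sym_pd (Q i) \<and> sym_pd (R i) \<and> onorm (\<lambda>x. Q i *v x) \<le> deltamax"
    and CE: "competitive_equilibrium n N A B x0 Q R H a lam U E"
    and k: "k < N"
  show "lam k \<le> lamdag"
  proof (rule ccontr)
    assume "\<not> lam k \<le> lamdag"
    then have lk: "lamdag < lam k" by simp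
    then have lkpos: "0 < lam k" using lam_pos by simp
    define C where "C = (\<lambda>j. \<Sum>i<n. a i j)"
    have feas: "\<And>i. i<n \<Longrightarrow> agent_feasible N (H i) (a i) (U i) (E i)"
      using CE unfolding competitive_equilibrium_def by blast
    have opt: "\<And>i. i<n \<Longrightarrow> \<forall>u e. agent_feasible N (H i) (a i) u e \<longrightarrow>
         agent_payoff N (A i) (B i) (x0 i) (Q i) (R i) lam u e \<le> agent_payoff N (A i) (B i) (x0 i) (Q i) (R i) lam (U i) (E i)"
      using CE unfolding competitive_equilibrium_def by blast
    have clear: "\<And>t. t<N \<Longrightarrow> (\<Sum>i<n. E i t) = 0"
      using CE unfolding competitive_equilibrium_def by blast
    have hnn: "\<rho> * (norm (U i t))^2 \<le> consumption (H i) (U i t)" if "i<n" for i t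
      using H_bd that unfolding consumption_def by (simp add: power2_norm_eq_inner)
    have hnn0: "0 \<le> consumption (H i) (U i t)" if "i<n" for i t
    proof -
      have "0 \<le> \<rho> * (norm (U i t))^2" using pos(4) by simp
      then show ?thesis using hnn[OF that, of t] by linarith
    qed
    have sumh: "(\<Sum>i<n. consumption (H i) (U i j)) \<le> C j" if j: "j<N" for j
    proof -
      have "(\<Sum>i<n. consumption (H i) (U i j)) \<le> (\<Sum>i<n. a i j - E i j)"
      proof (rule sum_mono)
        fix i assume "i \<in> {..<n}"
        then show "consumption (H i) (U i j) \<le> a i j - E i j"
          using feas[of i] j unfolding agent_feasible_def by auto
      qed
      also have "\<dots> = C j - (\<Sum>i<n. E i j)" unfolding C_def by (simp add: sum_subtractf)
      also have "\<dots> = C j" using clear[OF j] by simp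
      finally show ?thesis .
    qed
    have hle: "consumption (H i) (U i j) \<le> C j" if "i<n" "j<N" for i j
    proof -
      have "consumption (H i) (U i j) \<le> (\<Sum>i<n. consumption (H i) (U i j))"
        by (rule member_le_sum) (use that hnn0 in auto)
      then show ?thesis using sumh[OF that(2)] by linarith
    qed
    have ubd: "norm (U i j) \<le> sqrt (C j / \<rho>)" if "i<n" "j<N" for i j
    proof (rule real_le_rsqrt)
      have "\<rho> * (norm (U i j))^2 \<le> C j" using hnn[OF that(1), of j] hle[OF that] by linarith
      then show "(norm (U i j))^2 \<le> C j / \<rho>" using pos(4) by (simp add: pos_le_divide_eq mult.commute)
    qed
    have sumk: "(\<Sum>i<n. consumption (H i) (U i k)) = C k"
    proof -
      have "(\<Sum>i<n. consumption (H i) (U i k)) = (\<Sum>i<n. a i k - E i k)"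
      proof (rule sum.cong)
        fix i assume "i \<in> {..<n}"
        then show "consumption (H i) (U i k) = a i k - E i k"
          using tight[OF k lkpos feas[of i] opt[of i]] by simp
      qed simp
      also have "\<dots> = C k - (\<Sum>i<n. E i k)" unfolding C_def by (simp add: sum_subtractf)
      also have "\<dots> = C k" using clear[OF k] by simp
      finally show ?thesis .
    qed
    have Cpos: "0 < C k" using C_pos k unfolding C_def by simp
    have npos: "0 < n"
    proof (rule ccontr)
      assume "\<not> 0 < n" then have "n = 0" by simp
      then show False using Cpos unfolding C_def by simp
    qed
    have "\<exists>i<n. C k / real n \<le> consumption (H i) (U i k)"
    proof (rule ccontr)
      assume "\<not> ?thesis"
      then have lt: "\<And>i. i \<in> {..<n} \<Longrightarrow> consumption (H i) (U i k) < C k / real n" by auto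
      have "(\<Sum>i<n. consumption (H i) (U i k)) < (\<Sum>i<n. C k / real n)"
        by (rule sum_strict_mono) (use npos lt in auto)
      also have "\<dots> = C k" using npos by simp
      finally show False using sumk by simp
    qed
    then obtain i where i: "i < n" and hi: "C k / real n \<le> consumption (H i) (U i k)" by blast
    have hpos: "0 < consumption (H i) (U i k)"
    proof -
      have "0 < C k / real n" using Cpos npos by simp
      then show ?thesis using hi by linarith
    qed
    have Qi: "sym_pd (Q i)" and Ri: "sym_pd (R i)" and Qo: "onorm (\<lambda>x. Q i *v x) \<le> deltamax"
      using QR i by auto
    define m where "m = norm (U i k)"
    define X where "X = (\<lambda>t. \<gamma> * \<alpha> ^ (2*t - k - 1)
            + \<beta> * (\<Sum>j\<in>{0..t-1} - {k}. sqrt (C j / \<rho>) * \<alpha> ^ (2*t - j - k - 2)))"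
    have "lam k * consumption (H i) (U i k) \<le> (\<Sum>t\<in>{k+1..N}. \<bar>state (A i) (B i) (x0 i) ((U i)(k := 0)) t
          \<bullet> (Q i *v state (A i) (B i) 0 (\<lambda>j. if j = k then U i k else 0) t)\<bar>)"
      by (rule key_agent[OF k Qi Ri lkpos hpos feas[OF i] opt[OF i]])
    also have "\<dots> \<le> (\<Sum>t\<in>{k+1..N}. \<beta> * m * (deltamax * X t))"
    proof (rule sum_mono)
      fix t assume t: "t \<in> {k+1..N}"
      show "\<bar>state (A i) (B i) (x0 i) ((U i)(k := 0)) t
          \<bullet> (Q i *v state (A i) (B i) 0 (\<lambda>j. if j = k then U i k else 0) t)\<bar> \<le> \<beta> * m * (deltamax * X t)"
        unfolding m_def X_def
      proof (rule term_bound)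
        show "k + 1 \<le> t" using t by simp
        show "0 \<le> \<alpha>" "0 \<le> \<beta>" "0 \<le> deltamax" using pos delta_pos by auto
        show "\<And>x. norm (A i *v x) \<le> \<alpha> * norm x" using A_bd i by (intro mv_norm_le) auto
        show "\<And>x. norm (B i *v x) \<le> \<beta> * norm x" using B_bd i by (intro mv_norm_le) auto
        show "\<And>x. norm (Q i *v x) \<le> deltamax * norm x" using Qo by (rule mv_norm_le)
        show "norm (x0 i) \<le> \<gamma>" using x0_bd i by auto
        show "\<And>j. j \<noteq> k \<Longrightarrow> j < t \<Longrightarrow> norm (U i j) \<le> sqrt (C j / \<rho>)"
          using ubd[OF i] t by auto
      qed
    qed
    also have "\<dots> = \<beta> * m * (deltamax * (\<Sum>t\<in>{k+1..N}. X t))"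
      by (simp add: sum_distrib_left)
    also have "\<dots> \<le> \<beta> * m * (sqrt (C k * \<rho>) / (real n * \<beta>) * lamdag)"
    proof (rule mult_left_mono)
      show "deltamax * (\<Sum>t\<in>{k+1..N}. X t) \<le> sqrt (C k * \<rho>) / (real n * \<beta>) * lamdag"
        using delta_cond k unfolding X_def C_def by simp
      show "0 \<le> \<beta> * m" using pos unfolding m_def by simp
    qed
    also have "\<dots> = m * (sqrt (C k * \<rho>) / real n * lamdag)"
      using pos(3) by (simp add: field_simps)
    finally have main: "lam k * consumption (H i) (U i k) \<le> m * (sqrt (C k * \<rho>) / real n * lamdag)" .
    have "lam k \<le> lamdag"
    proof (rule final_arith[OF pos(4) Cpos _ _ hi _ lam_pos main])
      show "1 \<le> real n" using npos by simp
      show "\<rho> * m^2 \<le> consumption (H i) (U i k)" unfolding m_def by (rule hnn[OF i])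
      show "0 \<le> m" unfolding m_def by simp
    qed
    then show False using lk by simp
  qed
qed

end
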